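(* Let $\Phi$ be a root system of affine type and $c$ a Coxeter element. A root $\alpha\in\Phi_c\setminus\{\delta\}$ is $c$-compatible with $\delta$ (i.e. $(\alpha\|\delta)_c=0$) if and only if $\alpha\in\Upsilon^{\mathrm{re}}_c$.
   Context: $A=[a_{ij}]$ is an $n\times n$ symmetrizable Cartan matrix of affine type with symmetrizing constants $d_i$; $V$ has basis of simple roots $\Pi=\{\alpha_1,\dots,\alpha_n\}$, co-roots $\alpha_i^\vee=d_i^{-1}\alpha_i$, symmetric form $K(\alpha_i^\vee,\alpha_j)=a_{ij}$, reflections $s_i(v)=v-K(\alpha_i^\vee,v)\alpha_i$. $\Phi$ is the root system, $\Phi^+$ the positive roots; $[v:\alpha_i]$, $[v:\alpha_i^\vee]$ coordinates in root and co-root bases; $[x]_+=\max(x,0)$; $\beta^\vee=\frac2{K(\beta,\beta)}\beta$ for real roots, $(-\alpha_i)^\vee=-\alpha_i^\vee$; $\delta$ is the positive imaginary root closest to $0$ and $\delta^\vee$ the positive imaginary root closest to $0$ of the dual root system (Cartan matrix $A^T$). The Coxeter element is indexed $c=s_1\cdots s_n$. With $\alpha_{\mathrm{aff}}$ the affine simple root, $V_{\mathrm{fin}}$ the span of the others, $\Phi_{\mathrm{fin}}=\Phi\cap V_{\mathrm{fin}}$: $\gamma_c\in V_{\mathrm{fin}}$ unique with $c\gamma_c=\gamma_c+\delta$, $U_c=\{v:K(\gamma_c,v)=0\}$, $\Upsilon_c=\Phi\cap U_c$, $\Upsilon^{\mathrm{re}}_c$ the positive real roots in $U_c$ whose $c$-orbit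 contains a root of $\Phi_{\mathrm{fin}}$, $\Phi_c=-\Pi\cup(\Phi^+\setminus U_c)\cup\Upsilon^{\mathrm{re}}_c\cup\{\delta\}$. Real roots of $\Upsilon_c$ form a root system with irreducible components of affine type A; $\Pi_c$ is the unique minimal subset of $\Upsilon_c\cap\Phi^+$ whose nonnegative span contains $\Upsilon_c\cap\Phi^+$. Tube support $\mathrm{Supp}_{\Pi_c}(\beta)$: elements of $\Pi_c$ with nonzero coefficient in the unique expansion of $\beta$ in simple roots of its component; union for sets; component-full: containing all simple roots of some component. $\mathrm{adj}(\alpha,\beta)$ counts elements $\beta_j$ of $\mathrm{Supp}_{\Pi_c}(\beta)$ with $\beta_j\in\mathrm{Supp}_{\Pi_c}(c\alpha)\cup\mathrm{Supp}_{\Pi_c}(c^{-1}\alpha)$ and $\beta_j\notin\mathrm{Supp}_{\Pi_c}(\alpha)$. $(\alpha\|\beta)_c^{\to}=-\sum_{i}[\alpha^\vee:\alpha_i^\vee][\beta:\alpha_i]-\sum_{j<i}a_{ij}[\alpha^\vee:\alpha_i^\vee]_+[\beta:\alpha_j]_+$, $(\alpha\|\beta)_c^{\leftarrow}=-\sum_{i}[\alpha^\vee:\alpha_i^\vee][\beta:\alpha_i]-\sum_{i<j}a_{ij}[\alpha^\vee:\alpha_i^\vee]_+[\beta:\alpha_j]_+$; $(\alpha\|\beta)_c=\mathrm{adj}(\alpha,\beta)$ if $\alpha,\beta\in\Upsilon^{\mathrm{re}}_c$ and $\{\alpha,\beta\}$ is component-full, otherwise the maximum of these two. Distinct roots are $c$-compatible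 when their compatibility degree is $0$. *)

theory Defs
  imports Complex_Main
begin

text \<open>A vector of V is represented by its coordinates in the basis of simple roots,
  as a function nat => real that vanishes outside {1..n}.\<close>

type_synonym vec = "nat \<Rightarrow> real"

definition idx :: "nat \<Rightarrow> nat set" where
  "idx n = {1..n}"

definition in_V :: "nat \<Rightarrow> vec \<Rightarrow> bool" where
  "in_V n v \<longleftrightarrow> (\<forall>j. j \<notin> idx n \<longrightarrow> v j = 0)"

definition cmat :: "(nat \<Rightarrow> nat \<Rightarrow> int) \<Rightarrow> nat \<Rightarrow> nat \<Rightarrow> real" where
  "cmat A i j = real_of_int (A i j)"

definition transp_mat :: "(nat \<Rightarrow> nat \<Rightarrow> int) \<Rightarrow> nat \<Rightarrow> nat \<Rightarrow> int" where
  "transp_mat A i j = A j i"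

definition gen_cartan :: "nat \<Rightarrow> (nat \<Rightarrow> nat \<Rightarrow> int) \<Rightarrow> bool" where
  "gen_cartan n A \<longleftrightarrow>
     (\<forall>i\<in>idx n. A i i = 2) \<and>
     (\<forall>i\<in>idx n. \<forall>j\<in>idx n. i \<noteq> j \<longrightarrow> A i j \<le> 0) \<and>
     (\<forall>i\<in>idx n. \<forall>j\<in>idx n. A i j = 0 \<longleftrightarrow> A j i = 0)"

definition indecomposable :: "nat \<Rightarrow> (nat \<Rightarrow> nat \<Rightarrow> int) \<Rightarrow> bool" where
  "indecomposable n A \<longleftrightarrow>
     \<not> (\<exists>S T. S \<noteq> {} \<and> T \<noteq> {} \<and> S \<inter> T = {} \<and> S \<union> T = idx n \<and>
            (\<forall>i\<in>S. \<forall>j\<in>T. A i j = 0))"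

definition symmetrizing :: "nat \<Rightarrow> (nat \<Rightarrow> nat \<Rightarrow> int) \<Rightarrow> (nat \<Rightarrow> real) \<Rightarrow> bool" where
  "symmetrizing n A d \<longleftrightarrow>
     (\<forall>i\<in>idx n. d i > 0) \<and>
     (\<forall>i\<in>idx n. \<forall>j\<in>idx n. d i * cmat A i j = d j * cmat A j i)"

definition mat_vec :: "nat \<Rightarrow> (nat \<Rightarrow> nat \<Rightarrow> int) \<Rightarrow> vec \<Rightarrow> nat \<Rightarrow> real" where
  "mat_vec n A u i = (\<Sum>j\<in>idx n. cmat A i j * u j)"

text \<open>Affine type (Kac, Thm. 4.3, case (Aff)): indecomposable generalized Cartan matrix
  of corank 1 with a positive null vector u, and A v \<ge> 0 implies A v = 0.\<close>

definition affine_type :: "nat \<Rightarrow> (nat \<Rightarrow> nat \<Rightarrow> int) \<Rightarrow> bool" where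
  "affine_type n A \<longleftrightarrow>
     gen_cartan n A \<and> indecomposable n A \<and>
     (\<exists>u. (\<forall>i\<in>idx n. u i > 0) \<and> (\<forall>i\<in>idx n. mat_vec n A u i = 0) \<and>
          (\<forall>v. (\<forall>i\<in>idx n. mat_vec n A v i = 0) \<longrightarrow> (\<exists>t. \<forall>j\<in>idx n. v j = t * u j))) \<and>
     (\<forall>v. (\<forall>i\<in>idx n. mat_vec n A v i \<ge> 0) \<longrightarrow> (\<forall>i\<in>idx n. mat_vec n A v i = 0))"

definition simple :: "nat \<Rightarrow> vec" where
  "simple i = (\<lambda>j. if j = i then 1 else 0)"

definition Kform :: "nat \<Rightarrow> (nat \<Rightarrow> nat \<Rightarrow> int) \<Rightarrow> (nat \<Rightarrow> real) \<Rightarrow> vec \<Rightarrow> vec \<Rightarrow> real" where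
  "Kform n A d u v = (\<Sum>i\<in>idx n. \<Sum>j\<in>idx n. u i * v j * (d i * cmat A i j))"

definition simple_coroot :: "(nat \<Rightarrow> real) \<Rightarrow> nat \<Rightarrow> vec" where
  "simple_coroot d i = (\<lambda>j. simple i j / d i)"

definition refl :: "nat \<Rightarrow> (nat \<Rightarrow> nat \<Rightarrow> int) \<Rightarrow> (nat \<Rightarrow> real) \<Rightarrow> nat \<Rightarrow> vec \<Rightarrow> vec" where
  "refl n A d i v = (\<lambda>j. v j - Kform n A d (simple_coroot d i) v * simple i j)"

definition word_act :: "nat \<Rightarrow> (nat \<Rightarrow> nat \<Rightarrow> int) \<Rightarrow> (nat \<Rightarrow> real) \<Rightarrow> nat list \<Rightarrow> vec \<Rightarrow> vec" where
  "word_act n A d ws v = foldr (refl n A d) ws v"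

definition real_roots :: "nat \<Rightarrow> (nat \<Rightarrow> nat \<Rightarrow> int) \<Rightarrow> (nat \<Rightarrow> real) \<Rightarrow> vec set" where
  "real_roots n A d = {word_act n A d ws (simple i) | ws i. set ws \<subseteq> idx n \<and> i \<in> idx n}"

text \<open>The null root delta = sum of a_i alpha_i, with (a_i) the positive, relatively prime
  integer null vector of A (Kac's labels); it is the positive imaginary root closest to 0.
  Applied to the transpose of A it gives the coefficients of delta-check in the co-root basis.\<close>

definition null_root :: "nat \<Rightarrow> (nat \<Rightarrow> nat \<Rightarrow> int) \<Rightarrow> vec" where
  "null_root n A = (THE v. in_V n v \<and> (\<forall>i\<in>idx n. mat_vec n A v i = 0) \<and>
       (\<forall>i\<in>idx n. v i \<in> \<int> \<and> v i > 0) \<and>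
       (\<forall>w. in_V n w \<and> (\<forall>i\<in>idx n. mat_vec n A w i = 0) \<and> (\<forall>i\<in>idx n. w i \<in> \<int>)
            \<longrightarrow> (\<exists>k::int. \<forall>i. w i = of_int k * v i)))"

definition roots :: "nat \<Rightarrow> (nat \<Rightarrow> nat \<Rightarrow> int) \<Rightarrow> (nat \<Rightarrow> real) \<Rightarrow> vec set" where
  "roots n A d = real_roots n A d \<union>
     {(\<lambda>j. of_int k * null_root n A j) | k::int. k \<noteq> 0}"

definition pos_roots :: "nat \<Rightarrow> (nat \<Rightarrow> nat \<Rightarrow> int) \<Rightarrow> (nat \<Rightarrow> real) \<Rightarrow> vec set" where
  "pos_roots n A d = {\<beta> \<in> roots n A d. \<forall>i\<in>idx n. \<beta> i \<ge> 0}"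

text \<open>Coordinates [beta-check : alpha_i-check]: for real beta, beta-check = 2/K(beta,beta) beta;
  for delta, delta-check is the null root of the dual system.\<close>

definition coroot_coord :: "nat \<Rightarrow> (nat \<Rightarrow> nat \<Rightarrow> int) \<Rightarrow> (nat \<Rightarrow> real) \<Rightarrow> vec \<Rightarrow> nat \<Rightarrow> real" where
  "coroot_coord n A d \<beta> i =
     (if \<beta> = null_root n A then null_root n (transp_mat A) i
      else d i * (2 / Kform n A d \<beta> \<beta> * \<beta> i))"

definition pospart :: "real \<Rightarrow> real" where
  "pospart x = max x 0"

definition compat_right :: "nat \<Rightarrow> (nat \<Rightarrow> nat \<Rightarrow> int) \<Rightarrow> (nat \<Rightarrow> real) \<Rightarrow> vec \<Rightarrow> vec \<Rightarrow> real" where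
  "compat_right n A d \<alpha> \<beta> =
     - (\<Sum>i\<in>idx n. coroot_coord n A d \<alpha> i * \<beta> i)
     - (\<Sum>i\<in>idx n. \<Sum>j\<in>idx n. if j < i then
          cmat A i j * pospart (coroot_coord n A d \<alpha> i) * pospart (\<beta> j) else 0)"

definition compat_left :: "nat \<Rightarrow> (nat \<Rightarrow> nat \<Rightarrow> int) \<Rightarrow> (nat \<Rightarrow> real) \<Rightarrow> vec \<Rightarrow> vec \<Rightarrow> real" where
  "compat_left n A d \<alpha> \<beta> =
     - (\<Sum>i\<in>idx n. coroot_coord n A d \<alpha> i * \<beta> i)
     - (\<Sum>i\<in>idx n. \<Sum>j\<in>idx n. if i < j then
          cmat A i j * pospart (coroot_coord n A d \<alpha> i) * pospart (\<beta> j) else 0)"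

definition cox :: "nat \<Rightarrow> (nat \<Rightarrow> nat \<Rightarrow> int) \<Rightarrow> (nat \<Rightarrow> real) \<Rightarrow> vec \<Rightarrow> vec" where
  "cox n A d v = word_act n A d [1..<n+1] v"

definition cox_inv :: "nat \<Rightarrow> (nat \<Rightarrow> nat \<Rightarrow> int) \<Rightarrow> (nat \<Rightarrow> real) \<Rightarrow> vec \<Rightarrow> vec" where
  "cox_inv n A d v = word_act n A d (rev [1..<n+1]) v"

definition cox_pow :: "nat \<Rightarrow> (nat \<Rightarrow> nat \<Rightarrow> int) \<Rightarrow> (nat \<Rightarrow> real) \<Rightarrow> int \<Rightarrow> vec \<Rightarrow> vec" where
  "cox_pow n A d k v = (if k \<ge> 0 then (cox n A d ^^ nat k) v else (cox_inv n A d ^^ nat (- k)) v)"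

text \<open>Finite part (aff is the index of the affine simple root), gamma_c, U_c, Upsilon_c.\<close>

definition V_fin :: "nat \<Rightarrow> nat \<Rightarrow> vec set" where
  "V_fin n aff = {v. in_V n v \<and> v aff = 0}"

definition roots_fin :: "nat \<Rightarrow> (nat \<Rightarrow> nat \<Rightarrow> int) \<Rightarrow> (nat \<Rightarrow> real) \<Rightarrow> nat \<Rightarrow> vec set" where
  "roots_fin n A d aff = roots n A d \<inter> V_fin n aff"

definition gamma_c :: "nat \<Rightarrow> (nat \<Rightarrow> nat \<Rightarrow> int) \<Rightarrow> (nat \<Rightarrow> real) \<Rightarrow> nat \<Rightarrow> vec" where
  "gamma_c n A d aff = (THE g. g \<in> V_fin n aff \<and>
       cox n A d g = (\<lambda>j. g j + null_root n A j))"

definition U_c :: "nat \<Rightarrow> (nat \<Rightarrow> nat \<Rightarrow> int) \<Rightarrow> (nat \<Rightarrow> real) \<Rightarrow> nat \<Rightarrow> vec set" where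
  "U_c n A d aff = {v. in_V n v \<and> Kform n A d (gamma_c n A d aff) v = 0}"

definition Upsilon_c :: "nat \<Rightarrow> (nat \<Rightarrow> nat \<Rightarrow> int) \<Rightarrow> (nat \<Rightarrow> real) \<Rightarrow> nat \<Rightarrow> vec set" where
  "Upsilon_c n A d aff = roots n A d \<inter> U_c n A d aff"

definition Upsilon_re :: "nat \<Rightarrow> (nat \<Rightarrow> nat \<Rightarrow> int) \<Rightarrow> (nat \<Rightarrow> real) \<Rightarrow> nat \<Rightarrow> vec set" where
  "Upsilon_re n A d aff = {\<beta> \<in> pos_roots n A d \<inter> real_roots n A d \<inter> U_c n A d aff.
       \<exists>k::int. cox_pow n A d k \<beta> \<in> roots_fin n A d aff}"

definition Phi_c :: "nat \<Rightarrow> (nat \<Rightarrow> nat \<Rightarrow> int) \<Rightarrow> (nat \<Rightarrow> real) \<Rightarrow> nat \<Rightarrow> vec set" where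
  "Phi_c n A d aff =
     {(\<lambda>j. - simple i j) | i. i \<in> idx n} \<union>
     (pos_roots n A d - U_c n A d aff) \<union> Upsilon_re n A d aff \<union> {null_root n A}"

definition nonneg_span :: "vec set \<Rightarrow> vec set" where
  "nonneg_span P = {v. \<exists>F m. finite F \<and> F \<subseteq> P \<and> (\<forall>p\<in>F. m p \<ge> (0::real)) \<and>
                         v = (\<lambda>j. \<Sum>p\<in>F. m p * p j)}"

definition Pi_c :: "nat \<Rightarrow> (nat \<Rightarrow> nat \<Rightarrow> int) \<Rightarrow> (nat \<Rightarrow> real) \<Rightarrow> nat \<Rightarrow> vec set" where
  "Pi_c n A d aff = (THE P.
     P \<subseteq> Upsilon_c n A d aff \<inter> pos_roots n A d \<and>
     Upsilon_c n A d aff \<inter> pos_roots n A d \<subseteq> nonneg_span P \<and>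
     (\<forall>Q. Q \<subset> P \<longrightarrow> \<not> (Upsilon_c n A d aff \<inter> pos_roots n A d \<subseteq> nonneg_span Q)))"

definition tube_components :: "nat \<Rightarrow> (nat \<Rightarrow> nat \<Rightarrow> int) \<Rightarrow> (nat \<Rightarrow> real) \<Rightarrow> nat \<Rightarrow> vec set set" where
  "tube_components n A d aff =
     (let P = Pi_c n A d aff;
          R = (\<lambda>p q. p \<in> P \<and> q \<in> P \<and> Kform n A d p q \<noteq> 0)
      in {C. \<exists>p\<in>P. C = {q \<in> P. R\<^sup>*\<^sup>* p q}})"

definition tube_supp :: "nat \<Rightarrow> (nat \<Rightarrow> nat \<Rightarrow> int) \<Rightarrow> (nat \<Rightarrow> real) \<Rightarrow> nat \<Rightarrow> vec \<Rightarrow> vec set" where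
  "tube_supp n A d aff \<beta> = {g. \<exists>C\<in>tube_components n A d aff. g \<in> C \<and>
       (\<exists>m. \<beta> = (\<lambda>j. \<Sum>p\<in>C. m p * p j) \<and> m g \<noteq> (0::real))}"

definition tube_supp_set :: "nat \<Rightarrow> (nat \<Rightarrow> nat \<Rightarrow> int) \<Rightarrow> (nat \<Rightarrow> real) \<Rightarrow> nat \<Rightarrow> vec set \<Rightarrow> vec set" where
  "tube_supp_set n A d aff S = (\<Union>\<beta>\<in>S. tube_supp n A d aff \<beta>)"

definition component_full :: "nat \<Rightarrow> (nat \<Rightarrow> nat \<Rightarrow> int) \<Rightarrow> (nat \<Rightarrow> real) \<Rightarrow> nat \<Rightarrow> vec set \<Rightarrow> bool" where
  "component_full n A d aff S \<longleftrightarrow>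
     (\<exists>C\<in>tube_components n A d aff. C \<subseteq> tube_supp_set n A d aff S)"

definition adj :: "nat \<Rightarrow> (nat \<Rightarrow> nat \<Rightarrow> int) \<Rightarrow> (nat \<Rightarrow> real) \<Rightarrow> nat \<Rightarrow> vec \<Rightarrow> vec \<Rightarrow> nat" where
  "adj n A d aff \<alpha> \<beta> = card {b \<in> tube_supp n A d aff \<beta>.
       b \<in> tube_supp n A d aff (cox n A d \<alpha>) \<union> tube_supp n A d aff (cox_inv n A d \<alpha>) \<and>
       b \<notin> tube_supp n A d aff \<alpha>}"

definition compat_degree :: "nat \<Rightarrow> (nat \<Rightarrow> nat \<Rightarrow> int) \<Rightarrow> (nat \<Rightarrow> real) \<Rightarrow> nat \<Rightarrow> vec \<Rightarrow> vec \<Rightarrow> real" where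
  "compat_degree n A d aff \<alpha> \<beta> =
     (if \<alpha> \<in> Upsilon_re n A d aff \<and> \<beta> \<in> Upsilon_re n A d aff \<and>
         component_full n A d aff {\<alpha>, \<beta>}
      then real (adj n A d aff \<alpha> \<beta>)
      else max (compat_right n A d \<alpha> \<beta>) (compat_left n A d \<alpha> \<beta>))"

end

theory Submission
  imports Defs "Jordan_Normal_Form.Determinant"
begin


lemma finite_idx[simp]: "finite (idx n)" by (simp add: idx_def)

lemma Kform_sym:
  assumes "symmetrizing n A d"
  shows "Kform n A d u v = Kform n A d v u"
proof -
  have "Kform n A d u v = (\<Sum>i\<in>idx n. \<Sum>j\<in>idx n. u i * v j * (d j * cmat A j i))"
    unfolding Kform_def using assms unfolding symmetrizing_def
    by (intro sum.cong refl) (metis)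
  also have "\<dots> = Kform n A d v u"
    unfolding Kform_def by (subst sum.swap) (simp add: mult_ac)
  finally show ?thesis .
qed

lemma Kform_alt1: "Kform n A d u v = (\<Sum>i\<in>idx n. u i * d i * mat_vec n A v i)"
  unfolding Kform_def mat_vec_def by (simp add: sum_distrib_left mult_ac)

lemma Kform_alt2:
  assumes "symmetrizing n A d"
  shows "Kform n A d u v = (\<Sum>j\<in>idx n. v j * d j * mat_vec n A u j)"
  using Kform_alt1[of n A d v u] Kform_sym[OF assms] by simp

lemma if01_mult[simp]: "(if P then 1 else 0) * (x::real) = (if P then x else 0)" by simp
lemma ifmult1[simp]: "(if P then a else 0) * (b::real) = (if P then a*b else 0)" by simp
lemma ifmult2[simp]: "b * (if P then a else 0) = (if P then b*a else (0::real))" by simp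
lemma if01_div[simp]: "(if P then 1 else 0) / (x::real) = (if P then 1/x else 0)" by simp

lemma mat_vec_simple: "i \<in> idx n \<Longrightarrow> mat_vec n A (simple i) j = cmat A j i"
  unfolding mat_vec_def simple_def by (simp add: sum.delta)

lemma Kform_simple_left: "i \<in> idx n \<Longrightarrow> Kform n A d (simple i) v = d i * mat_vec n A v i"
  unfolding Kform_alt1 simple_def by (simp add: sum.delta)

lemma Kform_coroot: "i \<in> idx n \<Longrightarrow> d i > 0 \<Longrightarrow> Kform n A d (simple_coroot d i) v = mat_vec n A v i"
  unfolding Kform_alt1 simple_coroot_def simple_def by (simp add: sum.delta)

lemma mat_vec_lin: "mat_vec n A (\<lambda>j. u j - c * w j) i = mat_vec n A u i - c * mat_vec n A w i"
  unfolding mat_vec_def by (simp add: algebra_simps sum_subtractf sum_distrib_left)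

lemma mat_vec_scale: "mat_vec n A (\<lambda>j. c * w j) i = c * mat_vec n A w i"
  unfolding mat_vec_def by (simp add: algebra_simps sum_distrib_left)

lemma Kform_lin_left: "Kform n A d (\<lambda>j. u j - c * w j) v = Kform n A d u v - c * Kform n A d w v"
  unfolding Kform_alt1 by (simp add: algebra_simps sum_subtractf sum_distrib_left)

lemma Kform_lin_right: "Kform n A d v (\<lambda>j. u j - c * w j) = Kform n A d v u - c * Kform n A d v w"
  unfolding Kform_alt1 mat_vec_lin by (simp add: algebra_simps sum_subtractf sum_distrib_left)

lemma Kform_scale_left: "Kform n A d (\<lambda>j. c * w j) v = c * Kform n A d w v"
  unfolding Kform_alt1 by (simp add: algebra_simps sum_distrib_left)

lemma Kform_scale_right: "Kform n A d v (\<lambda>j. c * w j) = c * Kform n A d v w"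
  unfolding Kform_alt1 mat_vec_scale by (simp add: algebra_simps sum_distrib_left)

lemma refl_eq: "i \<in> idx n \<Longrightarrow> d i > 0 \<Longrightarrow> refl n A d i v = (\<lambda>j. v j - mat_vec n A v i * simple i j)"
  unfolding refl_def by (simp add: Kform_coroot)

lemma refl_invariant:
  assumes sym: "symmetrizing n A d" and gc: "gen_cartan n A" and i: "i \<in> idx n"
  shows "Kform n A d (refl n A d i u) (refl n A d i v) = Kform n A d u v"
proof -
  have di: "d i > 0" using sym i unfolding symmetrizing_def by auto
  have aii: "cmat A i i = 2" using gc i unfolding gen_cartan_def cmat_def by auto
  let ?e = "simple i"
  let ?a = "mat_vec n A u i" and ?b = "mat_vec n A v i"
  have 1: "refl n A d i u = (\<lambda>j. u j - ?a * ?e j)" "refl n A d i v = (\<lambda>j. v j - ?b * ?e j)"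
    using refl_eq[of i n d A, OF i di] by (auto simp: mult.commute)
  have ee: "Kform n A d ?e ?e = 2 * d i" using Kform_simple_left[OF i] mat_vec_simple[OF i] aii by simp
  have eu: "Kform n A d u ?e = d i * ?a" using Kform_sym[OF sym] Kform_simple_left[OF i] by metis
  have ev: "Kform n A d ?e v = d i * ?b" using Kform_simple_left[OF i] by simp
  show ?thesis unfolding 1 Kform_lin_left Kform_lin_right ee eu ev
    using Kform_sym[OF sym, of ?e u] eu by (simp add: algebra_simps)
qed

lemma refl_in_V: "i \<in> idx n \<Longrightarrow> in_V n v \<Longrightarrow> in_V n (refl n A d i v)"
  unfolding in_V_def refl_def simple_def by auto

lemma refl_other: "j \<noteq> i \<Longrightarrow> refl n A d i v j = v j"
  unfolding refl_def simple_def by auto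

lemma simple_in_V: "i \<in> idx n \<Longrightarrow> in_V n (simple i)"
  unfolding in_V_def simple_def by auto

lemma real_root_props:
  assumes sym: "symmetrizing n A d" and gc: "gen_cartan n A"
    and "\<beta> \<in> real_roots n A d"
  shows "in_V n \<beta> \<and> Kform n A d \<beta> \<beta> > 0"
proof -
  obtain ws i where b: "\<beta> = word_act n A d ws (simple i)" and ws: "set ws \<subseteq> idx n" and i: "i \<in> idx n"
    using assms(3) unfolding real_roots_def by auto
  have di: "d i > 0" using sym i unfolding symmetrizing_def by auto
  have aii: "cmat A i i = 2" using gc i unfolding gen_cartan_def cmat_def by auto
  have "in_V n (foldr (refl n A d) ws (simple i)) \<and>
        Kform n A d (foldr (refl n A d) ws (simple i)) (foldr (refl n A d) ws (simple i)) = 2 * d i"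
    using ws
  proof (induction ws)
    case Nil
    then show ?case using simple_in_V[OF i] Kform_simple_left[OF i] mat_vec_simple[OF i] aii by simp
  next
    case (Cons a ws)
    then show ?case using refl_in_V refl_invariant[OF sym gc] by auto
  qed
  then show ?thesis using di b unfolding word_act_def by simp
qed



lemma idx_sum: "sum f (idx n) = (\<Sum>j<n. f (Suc j))"
proof -
  have "idx n = Suc ` {..<n}" unfolding idx_def
    by (simp add: image_Suc_lessThan)
  then show ?thesis by (simp add: sum.reindex)
qed

definition intmat :: "nat \<Rightarrow> (nat \<Rightarrow> nat \<Rightarrow> int) \<Rightarrow> int mat" where
  "intmat n A = mat n n (\<lambda>(i,j). A (Suc i) (Suc j))"

lemma int_null_vector:
  assumes aff: "affine_type n A" and n: "n > 0"
  obtains w :: "nat \<Rightarrow> real" where "in_V n w" "\<forall>i\<in>idx n. mat_vec n A w i = 0" "\<forall>i\<in>idx n. w i \<in> \<int> \<and> w i > 0"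
proof -
  obtain u where upos: "\<forall>i\<in>idx n. u i > 0" and unull: "\<forall>i\<in>idx n. mat_vec n A u i = 0"
    and ker: "\<forall>v. (\<forall>i\<in>idx n. mat_vec n A v i = 0) \<longrightarrow> (\<exists>t. \<forall>j\<in>idx n. v j = t * u j)"
    using aff unfolding affine_type_def by blast
  let ?M = "intmat n A"
  let ?MR = "of_int_hom.mat_hom ?M :: real mat"
  let ?U = "vec n (\<lambda>i. u (Suc i))"
  have M: "?M \<in> carrier_mat n n" unfolding intmat_def by auto
  have MR: "?MR \<in> carrier_mat n n" using M by auto
  have "?MR *\<^sub>v ?U = 0\<^sub>v n"
  proof (rule eq_vecI)
    fix i assume i: "i < dim_vec (0\<^sub>v n :: real vec)"
    then have "(?MR *\<^sub>v ?U) $ i = mat_vec n A u (Suc i)"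
      unfolding mat_vec_def idx_sum using MR
      by (simp add: scalar_prod_def intmat_def cmat_def atLeast0LessThan)
    also have "\<dots> = 0" using unull i by (auto simp: idx_def)
    finally show "(?MR *\<^sub>v ?U) $ i = 0\<^sub>v n $ i" using i by simp
  qed (use MR in auto)
  moreover have "?U \<noteq> 0\<^sub>v n"
  proof
    assume "?U = 0\<^sub>v n"
    then have "?U $ 0 = 0" using n by simp
    then have "u 1 = 0" using n by simp
    moreover have "1 \<in> idx n" using n by (simp add: idx_def)
    ultimately show False using upos by fastforce
  qed
  moreover have "?U \<in> carrier_vec n" by simp
  ultimately have "det ?MR = 0" using det_0_iff_vec_prod_zero[OF MR] by blast
  then have "det ?M = 0" by simp
  then obtain w where w: "w \<in> carrier_vec n" "w \<noteq> 0\<^sub>v n" "?M *\<^sub>v w = 0\<^sub>v n"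
    using det_0_iff_vec_prod_zero[OF M] by auto
  define W :: "nat \<Rightarrow> real" where "W = (\<lambda>j. if j \<in> idx n then of_int (w $ (j - 1)) else 0)"
  have Wnull: "\<forall>i\<in>idx n. mat_vec n A W i = 0"
  proof
    fix i assume i: "i \<in> idx n"
    then have i1: "i - 1 < n" "Suc (i - 1) = i" by (auto simp: idx_def)
    have "of_int ((?M *\<^sub>v w) $ (i - 1)) = mat_vec n A W i"
      unfolding mat_vec_def idx_sum using M w(1) i1
      by (simp add: scalar_prod_def intmat_def cmat_def W_def idx_def atLeast0LessThan)
    then show "mat_vec n A W i = 0" using w(3) i1 by simp
  qed
  then obtain t where t: "\<forall>j\<in>idx n. W j = t * u j" using ker by blast
  have "t \<noteq> 0"
  proof
    assume "t = 0"
    then have "\<forall>j<n. w $ j = 0"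
    proof (intro allI impI)
      fix j assume "t = 0" "j < n"
      then have "Suc j \<in> idx n" by (auto simp: idx_def)
      then show "w $ j = 0" using t \<open>t = 0\<close> unfolding W_def by auto
    qed
    then have "w = 0\<^sub>v n" using w(1) by (intro eq_vecI) auto
    then show False using w(2) by simp
  qed
  define s where "s = (if t > 0 then 1 else -1 :: int)"
  define W' :: "nat \<Rightarrow> real" where "W' = (\<lambda>j. of_int s * W j)"
  show ?thesis
  proof (rule that[of W'])
    show "in_V n W'" unfolding in_V_def W'_def W_def by auto
    show "\<forall>i\<in>idx n. mat_vec n A W' i = 0" using Wnull unfolding W'_def mat_vec_scale by simp
    show "\<forall>i\<in>idx n. W' i \<in> \<int> \<and> W' i > 0"
    proof
      fix i assume i: "i \<in> idx n"
      have "W' i = of_int s * t * u i" using t i unfolding W'_def by simp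
      moreover have "of_int s * t > 0" using \<open>t \<noteq> 0\<close> unfolding s_def by auto
      ultimately have "W' i > 0" using upos i by simp
      moreover have "W' i \<in> \<int>" unfolding W'_def W_def by auto
      ultimately show "W' i \<in> \<int> \<and> W' i > 0" by simp
    qed
  qed
qed



definition NRP :: "nat \<Rightarrow> (nat \<Rightarrow> nat \<Rightarrow> int) \<Rightarrow> (nat \<Rightarrow> real) \<Rightarrow> bool" where
  "NRP n A v \<longleftrightarrow> in_V n v \<and> (\<forall>i\<in>idx n. mat_vec n A v i = 0) \<and>
       (\<forall>i\<in>idx n. v i \<in> \<int> \<and> v i > 0) \<and>
       (\<forall>w. in_V n w \<and> (\<forall>i\<in>idx n. mat_vec n A w i = 0) \<and> (\<forall>i\<in>idx n. w i \<in> \<int>)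
            \<longrightarrow> (\<exists>k::int. \<forall>i. w i = of_int k * v i))"

lemma mat_vec_add: "mat_vec n A (\<lambda>j. u j + w j) i = mat_vec n A u i + mat_vec n A w i"
  unfolding mat_vec_def by (simp add: algebra_simps sum.distrib)

lemma NRP_exists:
  assumes aff: "affine_type n A" and i0: "i0 \<in> idx n"
  shows "\<exists>v. NRP n A v"
proof -
  have n: "n > 0" using i0 by (auto simp: idx_def)
  obtain u where upos: "\<forall>i\<in>idx n. u i > 0" and unull: "\<forall>i\<in>idx n. mat_vec n A u i = 0"
    and ker: "\<forall>v. (\<forall>i\<in>idx n. mat_vec n A v i = 0) \<longrightarrow> (\<exists>t. \<forall>j\<in>idx n. v j = t * u j)"
    using aff unfolding affine_type_def by blast
  define P where "P v \<longleftrightarrow> in_V n v \<and> (\<forall>i\<in>idx n. mat_vec n A v i = 0) \<and>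
       (\<forall>i\<in>idx n. v i \<in> \<int> \<and> v i > 0)" for v :: "nat \<Rightarrow> real"
  obtain w0 where "P w0" using int_null_vector[OF aff n] unfolding P_def by blast
  define m where "m = (LEAST m::nat. \<exists>v. P v \<and> v i0 = real m)"
  have ex: "\<exists>m::nat. \<exists>v. P v \<and> v i0 = real m"
  proof -
    have "w0 i0 \<in> \<int>" "w0 i0 > 0" using \<open>P w0\<close> i0 unfolding P_def by auto
    then obtain k :: int where "w0 i0 = of_int k" by (auto elim: Ints_cases)
    then have "w0 i0 = real (nat k)" using \<open>w0 i0 > 0\<close> by simp
    then show ?thesis using \<open>P w0\<close> by blast
  qed
  obtain v0 where v0: "P v0" "v0 i0 = real m"
    using LeastI_ex[OF ex] unfolding m_def by blast
  have least: "\<And>v k. P v \<Longrightarrow> v i0 = real k \<Longrightarrow> m \<le> k"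
    unfolding m_def by (rule Least_le) blast
  have "NRP n A v0"
    unfolding NRP_def
  proof (intro conjI allI impI)
    show "in_V n v0" "\<forall>i\<in>idx n. mat_vec n A v0 i = 0" "\<forall>i\<in>idx n. v0 i \<in> \<int> \<and> v0 i > 0"
      using v0 unfolding P_def by auto
    fix w assume w: "in_V n w \<and> (\<forall>i\<in>idx n. mat_vec n A w i = 0) \<and> (\<forall>i\<in>idx n. w i \<in> \<int>)"
    obtain t where t: "\<forall>j\<in>idx n. w j = t * u j" using ker w by blast
    obtain s where s: "\<forall>j\<in>idx n. v0 j = s * u j" using ker v0 unfolding P_def by blast
    have "s > 0"
    proof -
      have "v0 i0 > 0" "u i0 > 0" using v0 upos i0 unfolding P_def by auto
      then show ?thesis using s i0 by (auto simp: zero_less_mult_iff)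
    qed
    define \<tau> where "\<tau> = t / s"
    have wt: "\<forall>j. w j = \<tau> * v0 j"
    proof
      fix j show "w j = \<tau> * v0 j"
      proof (cases "j \<in> idx n")
        case True then show ?thesis using s t \<open>s > 0\<close> unfolding \<tau>_def by simp
      next
        case False then show ?thesis using w v0 unfolding P_def in_V_def by simp
      qed
    qed
    define k where "k = \<lfloor>\<tau>\<rfloor>"
    define r where "r = \<tau> - of_int k"
    have r: "0 \<le> r" "r < 1" unfolding r_def k_def by linarith+
    have "r = 0"
    proof (rule ccontr)
      assume "r \<noteq> 0"
      with r have rpos: "r > 0" by simp
      define z where "z = (\<lambda>j. w j - of_int k * v0 j)"
      have zr: "\<And>j. z j = r * v0 j" unfolding z_def r_def using wt by (simp add: algebra_simps)
      have "P z"
        unfolding P_def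
      proof (intro conjI)
        show "in_V n z" using w v0 unfolding z_def in_V_def P_def by simp
        show "\<forall>i\<in>idx n. mat_vec n A z i = 0"
          unfolding z_def mat_vec_lin using w v0 unfolding P_def by simp
        show "\<forall>i\<in>idx n. z i \<in> \<int> \<and> z i > 0"
        proof
          fix i assume i: "i \<in> idx n"
          have "z i \<in> \<int>" unfolding z_def using w v0 i unfolding P_def by auto
          moreover have "z i > 0" using zr rpos v0 i unfolding P_def by simp
          ultimately show "z i \<in> \<int> \<and> z i > 0" by simp
        qed
      qed
      then have "z i0 \<in> \<int>" "z i0 > 0" using i0 unfolding P_def by auto
      then obtain kk :: int where kk: "z i0 = of_int kk" by (auto elim: Ints_cases)
      then have "z i0 = real (nat kk)" using \<open>z i0 > 0\<close> by simp
      with \<open>P z\<close> have "m \<le> nat kk" by (rule least)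
      moreover have "z i0 < v0 i0"
      proof -
        have "v0 i0 > 0" using v0 i0 unfolding P_def by auto
        then have "r * v0 i0 < 1 * v0 i0" using r by (intro mult_strict_right_mono) auto
        then show ?thesis using zr by simp
      qed
      ultimately show False using v0(2) \<open>z i0 = real (nat kk)\<close> by simp
    qed
    then have "\<tau> = of_int k" unfolding r_def by simp
    then show "\<exists>k::int. \<forall>i. w i = of_int k * v0 i" using wt by blast
  qed
  then show ?thesis by blast
qed

lemma NRP_unique:
  assumes "NRP n A v1" "NRP n A v2" and i0: "i0 \<in> idx n"
  shows "v1 = v2"
proof -
  obtain k where k: "\<forall>i. v1 i = of_int k * v2 i" using assms(2) assms(1) unfolding NRP_def by blast
  obtain k' where k': "\<forall>i. v2 i = of_int k' * v1 i" using assms(1) assms(2) unfolding NRP_def by blast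
  have p1: "v1 i0 > 0" and p2: "v2 i0 > 0" using assms i0 unfolding NRP_def by auto
  have e1: "v1 i0 = of_int k * v2 i0" using k by blast
  have e2: "v2 i0 = of_int k' * v1 i0" using k' by blast
  have "(of_int (k * k') - 1) * v1 i0 = 0" using e1 e2 by (simp add: algebra_simps)
  then have "of_int (k * k') = (1::real)" using p1 by simp
  then have "k * k' = 1" by linarith
  moreover have "k > 0" using e1 p1 p2 by (auto simp: zero_less_mult_iff)
  ultimately have "k = 1" by (simp add: pos_zmult_eq_1_iff)
  then show ?thesis using k by auto
qed

lemma null_root_NRP:
  assumes aff: "affine_type n A" and i0: "i0 \<in> idx n"
  shows "NRP n A (null_root n A)"
proof -
  obtain v where v: "NRP n A v" using NRP_exists[OF aff i0] by blast
  have "\<exists>!v. NRP n A v" using v NRP_unique[OF _ _ i0] by blast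
  then show ?thesis unfolding null_root_def NRP_def[symmetric] by (rule theI')
qed



lemma foldr_refl_other: "j \<notin> set ws \<Longrightarrow> foldr (refl n A d) ws v j = v j"
  by (induction ws) (auto simp: refl_other)

lemma cox_outside: "j \<notin> idx n \<Longrightarrow> cox n A d v j = v j"
  unfolding cox_def word_act_def by (rule foldr_refl_other) (auto simp: idx_def)

lemma cox_tri:
  assumes sym: "symmetrizing n A d" and i: "i \<in> idx n"
  shows "cox n A d v i - v i = - mat_vec n A v i
           - (\<Sum>k\<in>idx n. if i < k then cmat A i k * (cox n A d v k - v k) else 0)"
proof -
  have di: "d i > 0" using sym i unfolding symmetrizing_def by auto
  have i1: "1 \<le> i" "i \<le> n" using i by (auto simp: idx_def)
  have s1: "[1..<n+1] = [1..<i] @ [i..<n+1]" using upt_add_eq_append[of 1 i "n+1-i"] i1 by simp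
  have s2: "[i..<n+1] = i # [Suc i..<n+1]" using i1 by (simp add: upt_conv_Cons)
  have split: "[1..<n+1] = [1..<i] @ i # [Suc i..<n+1]" using s1 s2 by simp
  define Q where "Q = foldr (refl n A d) [Suc i..<n+1] v"
  have coxQ: "cox n A d v = foldr (refl n A d) [1..<i] (refl n A d i Q)"
    unfolding cox_def word_act_def split Q_def by simp
  have Qlow: "\<And>k. k \<le> i \<Longrightarrow> Q k = v k" unfolding Q_def by (rule foldr_refl_other) auto
  have Qhigh: "\<And>k. i < k \<Longrightarrow> cox n A d v k = Q k"
  proof -
    fix k assume "i < k"
    then have "cox n A d v k = refl n A d i Q k" unfolding coxQ by (intro foldr_refl_other) auto
    also have "\<dots> = Q k" using \<open>i < k\<close> by (simp add: refl_other)
    finally show "cox n A d v k = Q k" .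
  qed
  have "cox n A d v i = refl n A d i Q i" unfolding coxQ by (intro foldr_refl_other) auto
  also have "\<dots> = Q i - mat_vec n A Q i" using refl_eq[of i n d A, OF i di] by (simp add: simple_def)
  also have "mat_vec n A Q i = (\<Sum>k\<in>idx n. cmat A i k * v k)
        + (\<Sum>k\<in>idx n. if i < k then cmat A i k * (cox n A d v k - v k) else 0)"
    unfolding mat_vec_def sum.distrib[symmetric]
    by (intro sum.cong refl) (auto simp: Qlow Qhigh algebra_simps)
  finally show ?thesis using Qlow[of i] unfolding mat_vec_def by simp
qed

lemma tri_unique:
  assumes "\<forall>i\<in>idx n. w i + (\<Sum>k\<in>idx n. if i < k then cmat A i k * w k else 0) = b i"
    and "\<forall>i\<in>idx n. w' i + (\<Sum>k\<in>idx n. if i < k then cmat A i k * w' k else 0) = b i"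
  shows "\<forall>i\<in>idx n. w i = w' i"
proof -
  have "\<forall>i\<in>idx n. n - i < m \<longrightarrow> w i = w' i" for m
  proof (induction m)
    case 0 then show ?case by simp
  next
    case (Suc m)
    show ?case
    proof (intro ballI impI)
      fix i assume i: "i \<in> idx n" and lt: "n - i < Suc m"
      have "(\<Sum>k\<in>idx n. if i < k then cmat A i k * w k else 0) =
            (\<Sum>k\<in>idx n. if i < k then cmat A i k * w' k else 0)"
      proof (intro sum.cong refl)
        fix k assume k: "k \<in> idx n"
        show "(if i < k then cmat A i k * w k else 0) = (if i < k then cmat A i k * w' k else 0)"
        proof (cases "i < k")
          case True
          then have "n - k < m" using lt k i by (auto simp: idx_def)
          then show ?thesis using Suc.IH k by auto
        qed simp
      qed
      then show "w i = w' i" using assms i by force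
    qed
  qed
  then show ?thesis by (metis diff_less_Suc)
qed



definition xv :: "nat \<Rightarrow> (nat \<Rightarrow> nat \<Rightarrow> int) \<Rightarrow> (nat \<Rightarrow> real) \<Rightarrow> nat \<Rightarrow> real" where
  "xv n A D i = D i + (\<Sum>k\<in>idx n. if k < i then cmat A i k * D k else 0)"

definition yv :: "nat \<Rightarrow> (nat \<Rightarrow> nat \<Rightarrow> int) \<Rightarrow> (nat \<Rightarrow> real) \<Rightarrow> nat \<Rightarrow> real" where
  "yv n A D i = D i + (\<Sum>k\<in>idx n. if i < k then cmat A i k * D k else 0)"

lemma xv_yv:
  assumes gc: "gen_cartan n A" and i: "i \<in> idx n"
  shows "xv n A D i + yv n A D i = mat_vec n A D i"
proof -
  have aii: "cmat A i i = 2" using gc i unfolding gen_cartan_def cmat_def by auto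
  have "mat_vec n A D i = (\<Sum>k\<in>idx n. (if k < i then cmat A i k * D k else 0)
       + (if i < k then cmat A i k * D k else 0) + (if k = i then 2 * D i else 0))"
    unfolding mat_vec_def by (intro sum.cong refl) (auto simp: aii)
  also have "\<dots> = xv n A D i + yv n A D i"
    unfolding sum.distrib xv_def yv_def using i by (simp add: sum.delta)
  finally show ?thesis by simp
qed

lemma sum_dx_dy:
  assumes sym: "symmetrizing n A d"
  shows "(\<Sum>i\<in>idx n. D i * d i * xv n A D i) = (\<Sum>i\<in>idx n. D i * d i * yv n A D i)"
proof -
  have "(\<Sum>i\<in>idx n. D i * d i * (\<Sum>k\<in>idx n. if k < i then cmat A i k * D k else 0))
      = (\<Sum>i\<in>idx n. \<Sum>k\<in>idx n. if k < i then D i * D k * (d i * cmat A i k) else 0)"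
    by (simp add: sum_distrib_left if_distrib mult_ac cong: if_cong)
  also have "\<dots> = (\<Sum>k\<in>idx n. \<Sum>i\<in>idx n. if k < i then D i * D k * (d i * cmat A i k) else 0)"
    by (rule sum.swap)
  also have "\<dots> = (\<Sum>k\<in>idx n. \<Sum>i\<in>idx n. if k < i then D i * D k * (d k * cmat A k i) else 0)"
    using sym unfolding symmetrizing_def by (intro sum.cong refl) auto
  also have "\<dots> = (\<Sum>i\<in>idx n. D i * d i * (\<Sum>k\<in>idx n. if i < k then cmat A i k * D k else 0))"
    by (simp add: sum_distrib_left if_distrib mult_ac cong: if_cong)
  finally show ?thesis unfolding xv_def yv_def by (simp add: algebra_simps sum.distrib)
qed

lemma sum_dx_zero:
  assumes sym: "symmetrizing n A d" and gc: "gen_cartan n A"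
    and null: "\<forall>i\<in>idx n. mat_vec n A D i = 0"
  shows "(\<Sum>i\<in>idx n. D i * d i * xv n A D i) = 0"
proof -
  have "(\<Sum>i\<in>idx n. D i * d i * yv n A D i) = (\<Sum>i\<in>idx n. - (D i * d i * xv n A D i))"
    using xv_yv[OF gc] null by (intro sum.cong refl) (metis add.commute add_eq_0_iff mult_minus_right)
  then show ?thesis using sum_dx_dy[OF sym, of D] by (simp add: sum_negf)
qed



lemma sum_eq_at:
  assumes "finite I" "a \<in> I" "\<forall>i\<in>I-{a}. f i = g i" "sum f I = sum g I"
  shows "f a = (g a :: real)"
proof -
  have "sum f I = f a + sum f (I - {a})" "sum g I = g a + sum g (I - {a})"
    using assms by (auto simp: sum.remove)
  moreover have "sum f (I - {a}) = sum g (I - {a})" using assms by (intro sum.cong) auto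
  ultimately show ?thesis using assms by simp
qed

definition affmat :: "nat \<Rightarrow> (nat \<Rightarrow> nat \<Rightarrow> int) \<Rightarrow> nat \<Rightarrow> real mat" where
  "affmat n A aff = mat n n (\<lambda>(i,j). if Suc i = aff then (if Suc j = aff then 1 else 0)
                                   else cmat A (Suc i) (Suc j))"

definition vtof :: "nat \<Rightarrow> real Matrix.vec \<Rightarrow> nat \<Rightarrow> real" where
  "vtof n v j = (if j \<in> idx n then v $ (j - 1) else 0)"

lemma affmat_carrier: "affmat n A aff \<in> carrier_mat n n" unfolding affmat_def by auto

lemma affmat_mult:
  assumes v: "v \<in> carrier_vec n" and i: "i \<in> idx n" and aff: "aff \<in> idx n"
  shows "(affmat n A aff *\<^sub>v v) $ (i - 1) = (if i = aff then vtof n v aff else mat_vec n A (vtof n v) i)"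
proof -
  have i1: "i - 1 < n" "Suc (i - 1) = i" using i by (auto simp: idx_def)
  have a1: "aff - 1 < n" "Suc (aff - 1) = aff" using aff by (auto simp: idx_def)
  show ?thesis
  proof (cases "i = aff")
    case True
    have "(affmat n A aff *\<^sub>v v) $ (i - 1) = (\<Sum>j<n. if Suc j = aff then v $ j else 0)"
      using v i1 True unfolding affmat_def
      apply (simp add: scalar_prod_def atLeast0LessThan)
      apply (intro sum.cong)
       apply auto
      done
    also have "\<dots> = (\<Sum>j<n. if j = aff - 1 then v $ j else 0)"
      using a1 by (intro sum.cong refl) auto
    also have "\<dots> = vtof n v aff" using a1 aff by (simp add: vtof_def)
    finally show ?thesis using True by simp
  next
    case False
    have "(affmat n A aff *\<^sub>v v) $ (i - 1) = (\<Sum>j<n. cmat A i (Suc j) * v $ j)"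
      using v i1 False unfolding affmat_def by (simp add: scalar_prod_def atLeast0LessThan)
    also have "\<dots> = mat_vec n A (vtof n v) i"
      unfolding mat_vec_def idx_sum vtof_def by (intro sum.cong refl) (auto simp: idx_def)
    finally show ?thesis using False by simp
  qed
qed

context
  fixes n aff :: nat and A :: "nat \<Rightarrow> nat \<Rightarrow> int" and d :: "nat \<Rightarrow> real"
  assumes affT: "affine_type n A" and sym: "symmetrizing n A d" and aff: "aff \<in> idx n"
    and daff: "null_root n A aff = 1"
begin

lemma gc: "gen_cartan n A" using affT unfolding affine_type_def by simp

lemma dpos: "i \<in> idx n \<Longrightarrow> d i > 0" using sym unfolding symmetrizing_def by auto

lemma NR: "NRP n A (null_root n A)" using null_root_NRP[OF affT aff] .

lemma NR_inV: "in_V n (null_root n A)" using NR unfolding NRP_def by simp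
lemma NR_null: "i \<in> idx n \<Longrightarrow> mat_vec n A (null_root n A) i = 0" using NR unfolding NRP_def by simp
lemma NR_pos: "i \<in> idx n \<Longrightarrow> null_root n A i > 0" using NR unfolding NRP_def by simp

lemma ker1: "(\<forall>i\<in>idx n. mat_vec n A v i = 0) \<Longrightarrow> v aff = 0 \<Longrightarrow> \<forall>j\<in>idx n. v j = 0"
proof -
  assume h: "\<forall>i\<in>idx n. mat_vec n A v i = 0" "v aff = 0"
  obtain u where upos: "\<forall>i\<in>idx n. u i > 0"
    and ker: "\<forall>v. (\<forall>i\<in>idx n. mat_vec n A v i = 0) \<longrightarrow> (\<exists>t. \<forall>j\<in>idx n. v j = t * u j)"
    using affT unfolding affine_type_def by blast
  obtain t where t: "\<forall>j\<in>idx n. v j = t * u j" using ker h by blast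
  have "t = 0" using t h upos aff by fastforce
  then show ?thesis using t by simp
qed

lemma weighted_zero: "(\<Sum>i\<in>idx n. null_root n A i * d i * mat_vec n A v i) = 0"
proof -
  have "(\<Sum>i\<in>idx n. null_root n A i * d i * mat_vec n A v i) = Kform n A d (null_root n A) v"
    by (simp add: Kform_alt1)
  also have "\<dots> = (\<Sum>j\<in>idx n. v j * d j * mat_vec n A (null_root n A) j)" by (rule Kform_alt2[OF sym])
  also have "\<dots> = 0" using NR_null by simp
  finally show ?thesis .
qed

lemma gamma_exists: "\<exists>g. g \<in> V_fin n aff \<and> (\<forall>i\<in>idx n. mat_vec n A g i = xv n A (null_root n A) i)"
proof -
  let ?M = "affmat n A aff"
  let ?D = "null_root n A"
  have M: "?M \<in> carrier_mat n n" by (rule affmat_carrier)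
  have inj: "\<not> (\<exists>v. v \<in> carrier_vec n \<and> v \<noteq> 0\<^sub>v n \<and> ?M *\<^sub>v v = 0\<^sub>v n)"
  proof
    assume "\<exists>v. v \<in> carrier_vec n \<and> v \<noteq> 0\<^sub>v n \<and> ?M *\<^sub>v v = 0\<^sub>v n"
    then obtain v where v: "v \<in> carrier_vec n" "v \<noteq> 0\<^sub>v n" "?M *\<^sub>v v = 0\<^sub>v n" by blast
    let ?V = "vtof n v"
    have z: "\<And>i. i \<in> idx n \<Longrightarrow> (if i = aff then ?V aff else mat_vec n A ?V i) = 0"
    proof -
      fix i assume i: "i \<in> idx n"
      have "i - 1 < n" using i by (auto simp: idx_def)
      then show "(if i = aff then ?V aff else mat_vec n A ?V i) = 0"
        using affmat_mult[OF v(1) i aff, of A] v(3) M by simp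
    qed
    have Vaff: "?V aff = 0" using z[OF aff] by simp
    have others: "\<forall>i\<in>idx n - {aff}. ?D i * d i * mat_vec n A ?V i = 0"
    proof
      fix i assume i: "i \<in> idx n - {aff}"
      then have "mat_vec n A ?V i = 0" using z[of i] by auto
      then show "?D i * d i * mat_vec n A ?V i = 0" by simp
    qed
    have "?D aff * d aff * mat_vec n A ?V aff = 0"
      using sum_eq_at[OF finite_idx aff others[unfolded ] ] weighted_zero[of ?V] by simp
    then have "mat_vec n A ?V aff = 0" using daff dpos[OF aff] by simp
    then have "\<forall>i\<in>idx n. mat_vec n A ?V i = 0" using z by (metis (full_types))
    then have "\<forall>j\<in>idx n. ?V j = 0" using ker1 Vaff by blast
    then have "v = 0\<^sub>v n"
    proof (intro eq_vecI)
      fix j assume h: "\<forall>j\<in>idx n. ?V j = 0" and j: "j < dim_vec (0\<^sub>v n :: real Matrix.vec)"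
      then have "Suc j \<in> idx n" by (auto simp: idx_def)
      then show "v $ j = 0\<^sub>v n $ j" using h j by (auto simp: vtof_def)
    qed (use v in auto)
    then show False using v by simp
  qed
  then have "det ?M \<noteq> 0" using det_0_iff_vec_prod_zero[OF M] by blast
  then have "?M \<in> Units (ring_mat TYPE(real) n n)" by (rule det_non_zero_imp_unit[OF M])
  then obtain B where B: "B \<in> carrier_mat n n" "?M * B = 1\<^sub>m n"
    unfolding Units_def ring_mat_def by auto
  define b where "b = vec n (\<lambda>i. if Suc i = aff then 0 else xv n A ?D (Suc i))"
  define g where "g = B *\<^sub>v b"
  have g: "g \<in> carrier_vec n" unfolding g_def b_def using B by simp
  have Mg: "?M *\<^sub>v g = b" unfolding g_def using B M
    by (simp add: assoc_mult_mat_vec[symmetric, of _ n n _ n] b_def)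
  let ?G = "vtof n g"
  have eqs: "\<And>i. i \<in> idx n \<Longrightarrow> (if i = aff then ?G aff else mat_vec n A ?G i) =
                 (if i = aff then 0 else xv n A ?D i)"
  proof -
    fix i assume i: "i \<in> idx n"
    have i1: "i - 1 < n" "Suc (i - 1) = i" using i by (auto simp: idx_def)
    show "(if i = aff then ?G aff else mat_vec n A ?G i) = (if i = aff then 0 else xv n A ?D i)"
    proof -
      have bi: "b $ (i - 1) = (if i = aff then 0 else xv n A ?D i)"
      proof -
        have "b $ (i - 1) = (if Suc (i-1) = aff then 0 else xv n A ?D (Suc (i-1)))"
          unfolding b_def using i1(1) by (rule index_vec)
        then show ?thesis by (simp only: i1(2))
      qed
      show ?thesis using affmat_mult[OF g i aff, of A] Mg bi by simp
    qed
  qed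
  have Gaff: "?G aff = 0" using eqs[OF aff] by simp
  have others: "\<forall>i\<in>idx n - {aff}. ?D i * d i * mat_vec n A ?G i = ?D i * d i * xv n A ?D i"
  proof
    fix i assume i: "i \<in> idx n - {aff}"
    then have "mat_vec n A ?G i = xv n A ?D i" using eqs[of i] by auto
    then show "?D i * d i * mat_vec n A ?G i = ?D i * d i * xv n A ?D i" by simp
  qed
  have "?D aff * d aff * mat_vec n A ?G aff = ?D aff * d aff * xv n A ?D aff"
    using sum_eq_at[OF finite_idx aff others] weighted_zero[of ?G]
      sum_dx_zero[OF sym gc, of ?D] NR_null by simp
  then have "mat_vec n A ?G aff = xv n A ?D aff" using daff dpos[OF aff] by simp
  then have "\<forall>i\<in>idx n. mat_vec n A ?G i = xv n A ?D i" using eqs by (metis (full_types))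
  moreover have "?G \<in> V_fin n aff" using Gaff unfolding V_fin_def in_V_def vtof_def by simp
  ultimately show ?thesis by blast
qed

lemma cox_char:
  assumes g: "in_V n g"
  shows "cox n A d g = (\<lambda>j. g j + null_root n A j) \<longleftrightarrow>
         (\<forall>i\<in>idx n. mat_vec n A g i = xv n A (null_root n A) i)"
proof
  let ?D = "null_root n A"
  assume c: "cox n A d g = (\<lambda>j. g j + ?D j)"
  show "\<forall>i\<in>idx n. mat_vec n A g i = xv n A ?D i"
  proof
    fix i assume i: "i \<in> idx n"
    have "?D i = - mat_vec n A g i - (\<Sum>k\<in>idx n. if i < k then cmat A i k * ?D k else 0)"
    proof -
      have cg: "\<And>k. cox n A d g k - g k = ?D k" using c by simp
      show ?thesis using cox_tri[OF sym i, of g] unfolding cg by simp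
    qed
    then have "mat_vec n A g i = - yv n A ?D i" unfolding yv_def by simp
    moreover have "xv n A ?D i + yv n A ?D i = 0" using xv_yv[OF gc i] NR_null[OF i] by simp
    ultimately show "mat_vec n A g i = xv n A ?D i" by simp
  qed
next
  let ?D = "null_root n A"
  assume m: "\<forall>i\<in>idx n. mat_vec n A g i = xv n A ?D i"
  define w where "w j = cox n A d g j - g j" for j
  have "\<forall>i\<in>idx n. w i = ?D i"
  proof (rule tri_unique)
    show "\<forall>i\<in>idx n. w i + (\<Sum>k\<in>idx n. if i < k then cmat A i k * w k else 0) = yv n A ?D i"
    proof
      fix i assume i: "i \<in> idx n"
      have "xv n A ?D i + yv n A ?D i = 0" using xv_yv[OF gc i] NR_null[OF i] by simp
      then show "w i + (\<Sum>k\<in>idx n. if i < k then cmat A i k * w k else 0) = yv n A ?D i"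
        using cox_tri[OF sym i, of g] m i unfolding w_def by simp
    qed
    show "\<forall>i\<in>idx n. ?D i + (\<Sum>k\<in>idx n. if i < k then cmat A i k * ?D k else 0) = yv n A ?D i"
      unfolding yv_def by simp
  qed
  then show "cox n A d g = (\<lambda>j. g j + ?D j)"
  proof -
    assume h: "\<forall>i\<in>idx n. w i = ?D i"
    show ?thesis
    proof
      fix j show "cox n A d g j = g j + ?D j"
      proof (cases "j \<in> idx n")
        case True then show ?thesis using h unfolding w_def by force
      next
        case False then show ?thesis using cox_outside[OF False] NR_inV g unfolding in_V_def by simp
      qed
    qed
  qed
qed

lemma gamma_spec:
  "gamma_c n A d aff \<in> V_fin n aff \<and>
   (\<forall>i\<in>idx n. mat_vec n A (gamma_c n A d aff) i = xv n A (null_root n A) i)"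
proof -
  let ?D = "null_root n A"
  obtain g0 where g0: "g0 \<in> V_fin n aff" "\<forall>i\<in>idx n. mat_vec n A g0 i = xv n A ?D i"
    using gamma_exists by blast
  have uniq: "g = g0" if g: "g \<in> V_fin n aff" "\<forall>i\<in>idx n. mat_vec n A g i = xv n A ?D i" for g
  proof -
    have "\<forall>j\<in>idx n. (\<lambda>j. g j - 1 * g0 j) j = 0"
    proof (rule ker1)
      show "\<forall>i\<in>idx n. mat_vec n A (\<lambda>j. g j - 1 * g0 j) i = 0"
        unfolding mat_vec_lin using g g0 by simp
      show "g aff - 1 * g0 aff = 0" using g g0 unfolding V_fin_def by simp
    qed
    then have h: "\<forall>j\<in>idx n. g j = g0 j" by simp
    show ?thesis
    proof
      fix j show "g j = g0 j"
        using h g(1) g0(1) unfolding V_fin_def in_V_def by (cases "j \<in> idx n") auto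
    qed
  qed
  have "gamma_c n A d aff = g0"
    unfolding gamma_c_def
  proof (rule the_equality)
    show "g0 \<in> V_fin n aff \<and> cox n A d g0 = (\<lambda>j. g0 j + ?D j)"
      using g0 cox_char[of g0] unfolding V_fin_def by simp
    fix g assume "g \<in> V_fin n aff \<and> cox n A d g = (\<lambda>j. g j + ?D j)"
    then show "g = g0" using uniq cox_char[of g] unfolding V_fin_def by simp
  qed
  then show ?thesis using g0 by simp
qed

end


context
  fixes n aff :: nat and A :: "nat \<Rightarrow> nat \<Rightarrow> int" and d :: "nat \<Rightarrow> real"
  assumes affT: "affine_type n A" and sym: "symmetrizing n A d" and aff: "aff \<in> idx n"
    and daff: "null_root n A aff = 1"
begin

lemmas ctx = affT sym aff daff

lemma K_gamma: "Kform n A d (gamma_c n A d aff) v = (\<Sum>j\<in>idx n. v j * d j * xv n A (null_root n A) j)"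
  using Kform_alt2[OF sym, of "gamma_c n A d aff" v] gamma_spec[OF ctx] by simp

lemma sum_cx: "(\<Sum>i\<in>idx n. c i * xv n A (null_root n A) i) =
   (\<Sum>i\<in>idx n. c i * null_root n A i) +
   (\<Sum>i\<in>idx n. \<Sum>j\<in>idx n. if j < i then cmat A i j * c i * null_root n A j else 0)"
  unfolding xv_def by (simp add: distrib_left sum.distrib sum_distrib_left if_distrib mult_ac cong: if_cong)

lemma sum_cy: "(\<Sum>i\<in>idx n. c i * yv n A (null_root n A) i) =
   (\<Sum>i\<in>idx n. c i * null_root n A i) +
   (\<Sum>i\<in>idx n. \<Sum>j\<in>idx n. if i < j then cmat A i j * c i * null_root n A j else 0)"
  unfolding yv_def by (simp add: distrib_left sum.distrib sum_distrib_left if_distrib mult_ac cong: if_cong)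

lemma compat_formula:
  assumes ne: "\<alpha> \<noteq> null_root n A" and nn: "\<forall>i\<in>idx n. coroot_coord n A d \<alpha> i \<ge> 0"
  defines "t \<equiv> (\<Sum>i\<in>idx n. coroot_coord n A d \<alpha> i * xv n A (null_root n A) i)"
  shows "compat_right n A d \<alpha> (null_root n A) = - t" "compat_left n A d \<alpha> (null_root n A) = t"
proof -
  let ?D = "null_root n A"
  let ?c = "coroot_coord n A d \<alpha>"
  have pp: "\<And>i j. i \<in> idx n \<Longrightarrow> j \<in> idx n \<Longrightarrow> pospart (?c i) * pospart (?D j) = ?c i * ?D j"
  proof -
    fix i j assume i: "i \<in> idx n" and j: "j \<in> idx n"
    have "?c i \<ge> 0" using nn i by simp
    moreover have "?D j \<ge> 0" using NR_pos[OF ctx j] by simp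
    ultimately show "pospart (?c i) * pospart (?D j) = ?c i * ?D j" unfolding pospart_def by simp
  qed
  have R: "compat_right n A d \<alpha> ?D = - (\<Sum>i\<in>idx n. ?c i * ?D i)
     - (\<Sum>i\<in>idx n. \<Sum>j\<in>idx n. if j < i then cmat A i j * ?c i * ?D j else 0)"
    unfolding compat_right_def using pp by (intro arg_cong2[where f = minus] refl sum.cong) (auto simp: mult.assoc)
  have L: "compat_left n A d \<alpha> ?D = - (\<Sum>i\<in>idx n. ?c i * ?D i)
     - (\<Sum>i\<in>idx n. \<Sum>j\<in>idx n. if i < j then cmat A i j * ?c i * ?D j else 0)"
    unfolding compat_left_def using pp by (intro arg_cong2[where f = minus] refl sum.cong) (auto simp: mult.assoc)
  show "compat_right n A d \<alpha> ?D = - t" unfolding R t_def sum_cx by simp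
  have "(\<Sum>i\<in>idx n. ?c i * yv n A ?D i) = (\<Sum>i\<in>idx n. - (?c i * xv n A ?D i))"
  proof (intro sum.cong refl)
    fix i assume i: "i \<in> idx n"
    have "xv n A ?D i + yv n A ?D i = 0" using xv_yv[OF gc[OF ctx] i] NR_null[OF ctx i] by simp
    then have "yv n A ?D i = - xv n A ?D i" by simp
    then show "?c i * yv n A ?D i = - (?c i * xv n A ?D i)" by simp
  qed
  then show "compat_left n A d \<alpha> ?D = t" unfolding L t_def using sum_cy[of ?c] by (simp add: sum_negf)
qed

lemma K_delta_zero: "Kform n A d v (null_root n A) = 0"
  using Kform_alt1[of n A d v "null_root n A"] NR_null[OF ctx] by simp

lemma delta_not_real: "null_root n A \<notin> real_roots n A d"
  using real_root_props[OF sym gc[OF ctx], of "null_root n A"] K_delta_zero by auto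

lemma cd_eq: "compat_degree n A d aff \<alpha> (null_root n A) =
   max (compat_right n A d \<alpha> (null_root n A)) (compat_left n A d \<alpha> (null_root n A))"
  unfolding compat_degree_def Upsilon_re_def using delta_not_real by auto

lemma real_pos_case:
  assumes r: "\<alpha> \<in> real_roots n A d" and p: "\<forall>i\<in>idx n. \<alpha> i \<ge> 0" and ne: "\<alpha> \<noteq> null_root n A"
  shows "compat_degree n A d aff \<alpha> (null_root n A) = 0 \<longleftrightarrow> Kform n A d (gamma_c n A d aff) \<alpha> = 0"
proof -
  let ?D = "null_root n A"
  have K: "Kform n A d \<alpha> \<alpha> > 0" using real_root_props[OF sym gc[OF ctx] r] by simp
  have c: "\<And>i. coroot_coord n A d \<alpha> i = d i * (2 / Kform n A d \<alpha> \<alpha> * \<alpha> i)"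
    unfolding coroot_coord_def using ne by simp
  have nn: "\<forall>i\<in>idx n. coroot_coord n A d \<alpha> i \<ge> 0"
    unfolding c using K p dpos[OF ctx] by (simp add: less_imp_le)
  define t where "t = (\<Sum>i\<in>idx n. coroot_coord n A d \<alpha> i * xv n A ?D i)"
  have t: "t = 2 / Kform n A d \<alpha> \<alpha> * Kform n A d (gamma_c n A d aff) \<alpha>"
    unfolding t_def K_gamma c by (simp add: sum_distrib_left mult_ac)
  have "compat_degree n A d aff \<alpha> ?D = max (- t) t"
    unfolding cd_eq using compat_formula[OF ne nn] t_def by simp
  moreover have "max (- t) t = 0 \<longleftrightarrow> t = 0" by (simp add: max_def)
  moreover have "t = 0 \<longleftrightarrow> Kform n A d (gamma_c n A d aff) \<alpha> = 0" using t K by simp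
  ultimately show ?thesis by simp
qed

lemma neg_simple_case:
  assumes i: "i \<in> idx n"
  shows "compat_degree n A d aff (\<lambda>j. - simple i j) (null_root n A) = null_root n A i"
proof -
  let ?D = "null_root n A"
  let ?a = "\<lambda>j. - simple i j"
  have a: "?a = (\<lambda>j. (-1) * simple i j)" by simp
  have Kaa: "Kform n A d ?a ?a = 2 * d i"
    unfolding a Kform_scale_left Kform_scale_right Kform_simple_left[OF i] mat_vec_simple[OF i]
    using gc[OF ctx] i unfolding gen_cartan_def cmat_def by simp
  have ne: "?a \<noteq> ?D"
  proof
    assume h: "?a = ?D" then have "?a i = ?D i" by (rule fun_cong)
    then show False using NR_pos[OF ctx i] by (simp add: simple_def)
  qed
  have c: "\<And>k. coroot_coord n A d ?a k = (if k = i then -1 else 0)"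
    unfolding coroot_coord_def using ne Kaa dpos[OF ctx i] by (simp add: simple_def)
  have pc: "\<And>k. pospart (coroot_coord n A d ?a k) = 0" unfolding c pospart_def by simp
  have s: "(\<Sum>k\<in>idx n. coroot_coord n A d ?a k * ?D k) = - ?D i"
    unfolding c using i by (simp add: sum.delta)
  have "compat_right n A d ?a ?D = ?D i"
    unfolding compat_right_def pc s by simp
  moreover have "compat_left n A d ?a ?D = ?D i"
    unfolding compat_left_def pc s by simp
  ultimately show ?thesis unfolding cd_eq by simp
qed

lemma main_ctx:
  assumes a: "\<alpha> \<in> Phi_c n A d aff" and ne: "\<alpha> \<noteq> null_root n A"
  shows "compat_degree n A d aff \<alpha> (null_root n A) = 0 \<longleftrightarrow> \<alpha> \<in> Upsilon_re n A d aff"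
proof -
  let ?D = "null_root n A"
  let ?g = "gamma_c n A d aff"
  have ups_sub: "Upsilon_re n A d aff \<subseteq> real_roots n A d \<inter> pos_roots n A d \<inter> U_c n A d aff"
    unfolding Upsilon_re_def by auto
  consider (neg) i where "i \<in> idx n" "\<alpha> = (\<lambda>j. - simple i j)"
    | (out) "\<alpha> \<in> pos_roots n A d - U_c n A d aff"
    | (ups) "\<alpha> \<in> Upsilon_re n A d aff"
    using a ne unfolding Phi_c_def by blast
  then show ?thesis
  proof cases
    case neg
    have "\<alpha> \<notin> pos_roots n A d" using neg unfolding pos_roots_def by (auto simp: simple_def)
    then have "\<alpha> \<notin> Upsilon_re n A d aff" using ups_sub by blast
    moreover have "compat_degree n A d aff \<alpha> ?D \<noteq> 0"
      using neg neg_simple_case[of i] NR_pos[OF ctx, of i] by simp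
    ultimately show ?thesis by simp
  next
    case out
    then have r: "\<alpha> \<in> roots n A d" and p: "\<forall>i\<in>idx n. \<alpha> i \<ge> 0" and nu: "\<alpha> \<notin> U_c n A d aff"
      unfolding pos_roots_def by auto
    have real: "\<alpha> \<in> real_roots n A d"
    proof (rule ccontr)
      assume "\<alpha> \<notin> real_roots n A d"
      then obtain k :: int where k: "\<alpha> = (\<lambda>j. of_int k * ?D j)" using r unfolding roots_def by auto
      have "\<alpha> \<in> U_c n A d aff"
        unfolding U_c_def k
      proof (intro CollectI conjI)
        show "in_V n (\<lambda>j. of_int k * ?D j)" using NR_inV[OF ctx] unfolding in_V_def by simp
        show "Kform n A d ?g (\<lambda>j. of_int k * ?D j) = 0" unfolding Kform_scale_right K_delta_zero by simp
      qed
      then show False using nu by simp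
    qed
    have inV: "in_V n \<alpha>" using real_root_props[OF sym gc[OF ctx] real] by simp
    have "Kform n A d ?g \<alpha> \<noteq> 0" using nu inV unfolding U_c_def by simp
    then have "compat_degree n A d aff \<alpha> ?D \<noteq> 0" using real_pos_case[OF real p ne] by simp
    moreover have "\<alpha> \<notin> Upsilon_re n A d aff" using nu ups_sub by blast
    ultimately show ?thesis by simp
  next
    case ups
    then have real: "\<alpha> \<in> real_roots n A d" and p: "\<forall>i\<in>idx n. \<alpha> i \<ge> 0"
      and u: "\<alpha> \<in> U_c n A d aff" using ups_sub unfolding pos_roots_def by auto
    have "Kform n A d ?g \<alpha> = 0" using u unfolding U_c_def by simp
    then show ?thesis using real_pos_case[OF real p ne] ups by simp
  qed
qed

end

hide_type (open) Matrix.vec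

theorem proposition5p6:
  fixes n aff :: nat and A :: "nat \<Rightarrow> nat \<Rightarrow> int" and d :: "nat \<Rightarrow> real" and \<alpha> :: vec
  assumes "affine_type n A"
    and "symmetrizing n A d"
    and "aff \<in> idx n"
    and "null_root n A aff = 1"
    and "\<alpha> \<in> Phi_c n A d aff"
    and "\<alpha> \<noteq> null_root n A"
  shows "compat_degree n A d aff \<alpha> (null_root n A) = 0 \<longleftrightarrow> \<alpha> \<in> Upsilon_re n A d aff"
  by (rule main_ctx[OF assms(1-4) assms(5,6)])

end
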